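(* Let $n \ge 2$, $d \in \{1,\dots,n-1\}$, let $\triangle$ be a regular $n$-simplex in $\mathbb{R}^n$, and let $L = (n-d)(-\triangle)$. Then for every $(n-d)$-dimensional linear subspace $\xi$ of $\mathbb{R}^n$, $L_\xi$ contains a translate of $\triangle_\xi$; but for every $c$ with $0 < c < \tfrac{n}{n-d}$, the set $cL$ contains no translate of $\triangle$. (In particular, the constants $\tfrac{n}{n-1}$ in Theorem 5.1 and $\tfrac{n}{n-d}$ in Theorem 6.1 cannot be replaced by smaller constants.)
   Context: For a set $S\subseteq\mathbb{R}^n$ and a linear subspace $\xi$, $S_\xi$ denotes the orthogonal projection of $S$ onto $\xi$. "$A$ contains a translate of $B$" means $B + w \subseteq A$ for some vector $w$. For $c \in \mathbb{R}$, $cS = \{cx : x \in S\}$. *)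

theory Defs
  imports "HOL-Analysis.Analysis"
begin

definition orth_proj :: "'a::euclidean_space set \<Rightarrow> 'a \<Rightarrow> 'a" where
  "orth_proj \<xi> x = (THE p. p \<in> \<xi> \<and> (\<forall>y\<in>\<xi>. (x - p) \<bullet> y = 0))"

definition regular_simplex :: "'a::euclidean_space set \<Rightarrow> bool" where
  "regular_simplex S \<longleftrightarrow>
     (\<exists>V r. finite V \<and> card V = DIM('a) + 1 \<and> r > 0 \<and>
        (\<forall>u\<in>V. \<forall>v\<in>V. u \<noteq> v \<longrightarrow> dist u v = r) \<and> S = convex hull V)"

end

theory Submission
  imports Defs
begin


lemma orth_proj_unique:
  fixes \<xi> :: "'a::euclidean_space set"
  assumes "subspace \<xi>" "p \<in> \<xi>" "\<forall>y\<in>\<xi>. (x - p) \<bullet> y = 0"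
  shows "orth_proj \<xi> x = p"
  unfolding orth_proj_def
proof (rule the_equality)
  show "p \<in> \<xi> \<and> (\<forall>y\<in>\<xi>. (x - p) \<bullet> y = 0)" using assms by auto
  fix p' assume h: "p' \<in> \<xi> \<and> (\<forall>y\<in>\<xi>. (x - p') \<bullet> y = 0)"
  have m: "p - p' \<in> \<xi>" using assms h by (simp add: subspace_diff)
  have "(x - p') \<bullet> (p - p') - (x - p) \<bullet> (p - p') = 0" using h assms m by auto
  then have "(p - p') \<bullet> (p - p') = 0" by (simp add: inner_diff_left inner_diff_right algebra_simps)
  then show "p' = p" by simp
qed

lemma orth_proj_spec:
  fixes \<xi> :: "'a::euclidean_space set"
  assumes "subspace \<xi>"
  shows "orth_proj \<xi> x \<in> \<xi> \<and> (\<forall>y\<in>\<xi>. (x - orth_proj \<xi> x) \<bullet> y = 0)"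
proof -
  obtain y z where y: "y \<in> span \<xi>" and z: "\<And>w. w \<in> span \<xi> \<Longrightarrow> orthogonal z w" and e: "x = y + z"
    using orthogonal_subspace_decomp_exists[of \<xi> x] by metis
  have sp: "span \<xi> = \<xi>" using assms by (simp add: span_eq_iff)
  have "\<forall>w\<in>\<xi>. (x - y) \<bullet> w = 0" using z e sp by (auto simp: orthogonal_def)
  moreover have "y \<in> \<xi>" using y sp by simp
  ultimately have "orth_proj \<xi> x = y" using orth_proj_unique assms by blast
  then show ?thesis using \<open>y \<in> \<xi>\<close> \<open>\<forall>w\<in>\<xi>. (x - y) \<bullet> w = 0\<close> by simp
qed

lemma orth_proj_linear:
  fixes \<xi> :: "'a::euclidean_space set"
  assumes "subspace \<xi>"
  shows "linear (orth_proj \<xi>)"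
proof (rule linearI)
  fix x y
  show "orth_proj \<xi> (x + y) = orth_proj \<xi> x + orth_proj \<xi> y"
  proof (rule orth_proj_unique[OF assms])
    show "orth_proj \<xi> x + orth_proj \<xi> y \<in> \<xi>"
      using orth_proj_spec[OF assms] assms by (simp add: subspace_add)
    show "\<forall>z\<in>\<xi>. (x + y - (orth_proj \<xi> x + orth_proj \<xi> y)) \<bullet> z = 0"
    proof
      fix z assume "z \<in> \<xi>"
      then have "(x - orth_proj \<xi> x) \<bullet> z = 0" "(y - orth_proj \<xi> y) \<bullet> z = 0"
        using orth_proj_spec[OF assms] by auto
      then show "(x + y - (orth_proj \<xi> x + orth_proj \<xi> y)) \<bullet> z = 0"
        by (simp add: inner_diff_left inner_add_left algebra_simps)
    qed
  qed
next
  fix c :: real and x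
  show "orth_proj \<xi> (c *\<^sub>R x) = c *\<^sub>R orth_proj \<xi> x"
  proof (rule orth_proj_unique[OF assms])
    show "c *\<^sub>R orth_proj \<xi> x \<in> \<xi>"
      using orth_proj_spec[OF assms] assms by (simp add: subspace_scale)
    show "\<forall>z\<in>\<xi>. (c *\<^sub>R x - c *\<^sub>R orth_proj \<xi> x) \<bullet> z = 0"
    proof
      fix z assume "z \<in> \<xi>"
      then have "(x - orth_proj \<xi> x) \<bullet> z = 0"
        using orth_proj_spec[OF assms] by auto
      then show "(c *\<^sub>R x - c *\<^sub>R orth_proj \<xi> x) \<bullet> z = 0"
        by (metis inner_scaleR_left mult_zero_right scaleR_right_diff_distrib)
    qed
  qed
qed

lemma gram:
  fixes V :: "'a::euclidean_space set"
  assumes fin: "finite V" and N: "card V = N" "N > 0"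
    and dst: "\<forall>u\<in>V. \<forall>v\<in>V. u \<noteq> v \<longrightarrow> dist u v = r"
    and g: "g = (1 / real N) *\<^sub>R sum (\<lambda>v. v) V"
    and uv: "u \<in> V" "v \<in> V"
  shows "(v - g) \<bullet> (u - g) = (if u = v then 0 else - (r^2))/2 + (real N - 1) * r^2 / (2 * real N)"
proof -
  define q where "q a = a \<bullet> a" for a :: 'a
  define Q where "Q = sum q V"
  define \<delta> where "\<delta> a b = (if a = b then 0 else r^2)" for a b :: 'a
  have ip: "a \<bullet> b = (q a + q b - \<delta> a b)/2" if "a \<in> V" "b \<in> V" for a b
  proof (cases "a = b")
    case True then show ?thesis by (simp add: q_def \<delta>_def)
  next
    case False
    then have "dist a b = r" using dst that by auto
    then have "(a - b) \<bullet> (a - b) = r^2" by (metis dist_norm power2_norm_eq_inner)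
    then show ?thesis using False
      by (simp add: q_def \<delta>_def inner_diff_left inner_diff_right inner_commute[of b a] algebra_simps)
  qed
  have sd: "(\<Sum>b\<in>V. \<delta> a b) = (real N - 1) * r^2" if "a \<in> V" for a
  proof -
    have "(\<Sum>b\<in>V. \<delta> a b) = (\<Sum>b\<in>V. r^2 - (if a = b then r^2 else 0))"
      by (rule sum.cong) (auto simp: \<delta>_def)
    also have "\<dots> = real N * r^2 - r^2"
      using fin that N by (simp add: sum_subtractf)
    finally show ?thesis by (simp add: algebra_simps)
  qed
  have ag: "a \<bullet> g = (real N * q a + Q - (real N - 1) * r^2) / (2 * real N)" if "a \<in> V" for a
  proof -
    have "a \<bullet> g = (1 / real N) * (\<Sum>b\<in>V. a \<bullet> b)"
      by (simp add: g inner_sum_right)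
    also have "(\<Sum>b\<in>V. a \<bullet> b) = (\<Sum>b\<in>V. (q a + q b - \<delta> a b)/2)"
      by (rule sum.cong) (use ip that in auto)
    also have "\<dots> = (real N * q a + Q - (real N - 1) * r^2)/2"
      using sd[OF that] N
      by (simp add: sum_divide_distrib[symmetric] sum.distrib sum_subtractf Q_def)
    finally show ?thesis using N by simp
  qed
  have gg: "g \<bullet> g = (2 * real N * Q - real N * (real N - 1) * r^2) / (2 * real N * real N)"
  proof -
    have "g \<bullet> g = ((1 / real N) *\<^sub>R sum (\<lambda>v. v) V) \<bullet> g" using g by simp
    also have "\<dots> = (1 / real N) * (\<Sum>a\<in>V. a \<bullet> g)"
      by (simp only: inner_scaleR_left inner_sum_left)
    also have "(\<Sum>a\<in>V. a \<bullet> g) = (\<Sum>a\<in>V. (real N * q a + Q - (real N - 1) * r^2) / (2 * real N))"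
      by (rule sum.cong) (use ag in auto)
    also have "\<dots> = (real N * Q + real N * Q - real N * ((real N - 1) * r^2)) / (2 * real N)"
      using N
      by (simp add: sum_divide_distrib[symmetric] sum.distrib sum_subtractf Q_def sum_distrib_left)
    finally show ?thesis using N by (simp add: field_simps)
  qed
  have "(v - g) \<bullet> (u - g) = v \<bullet> u - v \<bullet> g - u \<bullet> g + g \<bullet> g"
    by (simp add: inner_diff_left inner_diff_right inner_commute[of g u])
  also have "\<dots> = (if u = v then 0 else - (r^2))/2 + (real N - 1) * r^2 / (2 * real N)"
    using N uv by (simp add: ip ag gg \<delta>_def field_simps; simp add: algebra_simps)
  finally show ?thesis .
qed


lemma no_translate:
  fixes V :: "'a::euclidean_space set"
  assumes fin: "finite V" and N: "card V = N" "N > 0" and r: "r > 0"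
    and dst: "\<forall>u\<in>V. \<forall>v\<in>V. u \<noteq> v \<longrightarrow> dist u v = r"
    and gram: "\<And>g u v. g = (1 / real N) *\<^sub>R sum (\<lambda>v. v) V \<Longrightarrow> u \<in> V \<Longrightarrow> v \<in> V \<Longrightarrow>
        (v - g) \<bullet> (u - g) = (if u = v then 0 else - (r^2))/2 + (real N - 1) * r^2 / (2 * real N)"
    and lam: "l > 0"
    and inc: "\<forall>u\<in>V. \<exists>x\<in>convex hull V. u + w = - (l *\<^sub>R x)"
  shows "real N - 1 \<le> l"
proof -
  define g where "g = (1 / real N) *\<^sub>R sum (\<lambda>v. v) V"
  have gr: "\<And>u v. u \<in> V \<Longrightarrow> v \<in> V \<Longrightarrow>
        (v - g) \<bullet> (u - g) = (if u = v then 0 else - (r^2))/2 + (real N - 1) * r^2 / (2 * real N)"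
    using gram g_def by blast
  have bound: "(x - g) \<bullet> (u - g) \<ge> - (r^2 / (2 * real N))" if "x \<in> convex hull V" "u \<in> V" for x u
  proof -
    let ?H = "{x. x \<bullet> (u - g) \<ge> - (r^2 / (2 * real N)) + g \<bullet> (u - g)}"
    have cH: "convex ?H" using convex_halfspace_ge[where a="u - g" and b="- (r^2 / (2 * real N)) + g \<bullet> (u - g)"] by (simp add: inner_commute)
    have "V \<subseteq> ?H"
    proof
      fix v assume v: "v \<in> V"
      have "(v - g) \<bullet> (u - g) \<ge> - (r^2 / (2 * real N))"
      proof (cases "u = v")
        case True
        have "0 \<le> (real N - 1) * r^2 / (2 * real N)" using N by (cases N) auto
        moreover have "0 \<le> r^2 / (2 * real N)" by simp
        moreover have "(v - g) \<bullet> (u - g) = (real N - 1) * r^2 / (2 * real N)" using gr[OF that(2) v] True by simp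
        ultimately show ?thesis by linarith
      next
        case False
        then show ?thesis using gr[OF that(2) v] N by (simp add: field_simps)
      qed
      then show "v \<in> ?H" by (simp add: inner_diff_left)
    qed
    then have "convex hull V \<subseteq> ?H" using cH by (rule hull_minimal)
    then show ?thesis using that(1) by (auto simp: inner_diff_left)
  qed
  define w' where "w' = w + (1 + l) *\<^sub>R g"
  have key: "(u - g) \<bullet> (u - g) + w' \<bullet> (u - g) \<le> l * (r^2 / (2 * real N))" if u: "u \<in> V" for u
  proof -
    obtain x where x: "x \<in> convex hull V" "u + w = - (l *\<^sub>R x)" using inc u by blast
    have lx: "l *\<^sub>R x = - (u + w)" using x(2) by simp
    have e: "l *\<^sub>R (x - g) = - ((u - g) + w')"
      unfolding w'_def scaleR_right_diff_distrib lx by (simp add: algebra_simps)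
    have "l * ((x - g) \<bullet> (u - g)) \<ge> l * (- (r^2 / (2 * real N)))"
      using mult_left_mono[OF bound[OF x(1) u], of l] lam by simp
    moreover have "l * ((x - g) \<bullet> (u - g)) = - ((u - g) \<bullet> (u - g) + w' \<bullet> (u - g))"
      by (metis e inner_scaleR_left inner_minus_left inner_add_left)
    ultimately show ?thesis by simp
  qed
  have diag: "(u - g) \<bullet> (u - g) = (real N - 1) * r^2 / (2 * real N)" if "u \<in> V" for u
    using gr[OF that that] by simp
  have "(\<Sum>u\<in>V. (u - g) \<bullet> (u - g) + w' \<bullet> (u - g)) \<le> (\<Sum>u\<in>V. l * (r^2 / (2 * real N)))"
    by (rule sum_mono) (use key in auto)
  moreover have "(\<Sum>u\<in>V. (u - g) \<bullet> (u - g) + w' \<bullet> (u - g)) = real N * ((real N - 1) * r^2 / (2 * real N)) + w' \<bullet> (\<Sum>u\<in>V. u - g)"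
    using N diag by (simp add: sum.distrib inner_sum_right)
  moreover have "(\<Sum>u\<in>V. u - g) = 0"
    using N by (simp add: sum_subtractf g_def sum_constant_scaleR)
  ultimately have "real N * ((real N - 1) * r^2 / (2 * real N)) \<le> real N * (l * (r^2 / (2 * real N)))"
    using N by simp
  moreover have "real N * ((real N - 1) * r^2 / (2 * real N)) = (real N - 1) * r^2 / 2" using N by simp
  moreover have "real N * (l * (r^2 / (2 * real N))) = l * r^2 / 2" using N by simp
  ultimately have "(real N - 1) * r^2 \<le> l * r^2" by simp
  then show ?thesis using r by simp
qed


lemma Helly_sub_induct:
  fixes \<F> :: "'a::euclidean_space set set"
  assumes "card \<F> = n"
    and "n \<ge> k + 1"
    and "\<forall>S\<in>\<F>. convex S \<and> S \<subseteq> \<xi>" "dim \<xi> \<le> k" "\<forall>T\<subseteq>\<F>. card T = k + 1 \<longrightarrow> \<Inter>T \<noteq> {}"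
  shows "\<Inter>\<F> \<noteq> {}"
  using assms
proof (induction n arbitrary: \<F>)
  case 0
  then show ?case by auto
next
  case (Suc n)
  have "finite \<F>"
    using \<open>card \<F> = Suc n\<close> by (auto intro: card_ge_0_finite)
  show "\<Inter>\<F> \<noteq> {}"
  proof (cases "n = k")
    case True
    then show ?thesis
      by (simp add: Suc.prems)
  next
    case False
    have "\<Inter>(\<F> - {S}) \<noteq> {}" if "S \<in> \<F>" for S
    proof (rule Suc.IH[rule_format])
      show "card (\<F> - {S}) = n"
        by (simp add: Suc.prems(1) \<open>finite \<F>\<close> that)
      show "k + 1 \<le> n"
        using False Suc.prems(2) by linarith
      show "\<And>t. \<lbrakk>t \<subseteq> \<F> - {S}; card t = k + 1\<rbrakk> \<Longrightarrow> \<Inter>t \<noteq> {}"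
        by (simp add: Suc.prems(5) subset_Diff_insert)
    qed (use Suc in auto)
    then have "\<forall>S\<in>\<F>. \<exists>x. x \<in> \<Inter>(\<F> - {S})"
      by blast
    then obtain X where X: "\<And>S. S\<in>\<F> \<Longrightarrow> X S \<in> \<Inter>(\<F> - {S})"
      by metis
    show ?thesis
    proof (cases "inj_on X \<F>")
      case False
      then obtain S T where "S\<noteq>T" and st: "S\<in>\<F>" "T\<in>\<F>" "X S = X T"
        unfolding inj_on_def by auto
      then have *: "\<Inter>\<F> = \<Inter>(\<F> - {S}) \<inter> \<Inter>(\<F> - {T})" by auto
      show ?thesis
        by (metis "*" X disjoint_iff_not_equal st)
    next
      case True
      have sub: "X ` \<F> \<subseteq> \<xi>"
      proof
        fix z assume "z \<in> X ` \<F>"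
        then obtain S where S: "S \<in> \<F>" "z = X S" by auto
        have "card (\<F> - {S}) = n" using S \<open>finite \<F>\<close> Suc.prems(1) by simp
        moreover have "n \<ge> 1" using False Suc.prems(2) by linarith
        ultimately have "\<F> - {S} \<noteq> {}" by (metis card.empty not_one_le_zero)
        then obtain S' where "S' \<in> \<F> - {S}" by blast
        then show "z \<in> \<xi>" using X[OF S(1)] S Suc.prems(3) by blast
      qed
      have "dim (X ` \<F>) \<le> k" using dim_subset[OF sub] Suc.prems(4) by linarith
      moreover have "card (X ` \<F>) = Suc n" using True Suc.prems(1) by (simp add: card_image)
      ultimately have ad: "affine_dependent (X ` \<F>)"
        using affine_dependent_biggerset_general[of "X ` \<F>"] \<open>finite \<F>\<close> False Suc.prems(2) by auto
      then obtain M P where mp: "M \<inter> P = {}" "M \<union> P = X ` \<F>" "convex hull M \<inter> convex hull P \<noteq> {}"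
        using Radon_partition[of "X ` \<F>"] \<open>finite \<F>\<close> by auto
      have "M \<subseteq> X ` \<F>" "P \<subseteq> X ` \<F>"
        using mp(2) by auto
      then obtain \<G> \<H> where gh:"M = X ` \<G>" "P = X ` \<H>" "\<G> \<subseteq> \<F>" "\<H> \<subseteq> \<F>"
        unfolding subset_image_iff by auto
      then have "\<F> \<union> (\<G> \<union> \<H>) = \<F>" by auto
      then have \<F>: "\<F> = \<G> \<union> \<H>"
        using inj_on_Un_image_eq_iff[of X \<F> "\<G> \<union> \<H>"] and True
        unfolding mp(2)[unfolded image_Un[symmetric] gh]
        by auto
      have *: "\<G> \<inter> \<H> = {}"
        using gh local.mp(1) by blast
      have cv: "\<forall>S\<in>\<F>. convex S" using Suc.prems(3) by blast
      have "convex hull (X ` \<H>) \<subseteq> \<Inter>\<G>" "convex hull (X ` \<G>) \<subseteq> \<Inter>\<H>"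
        by (rule hull_minimal; use X * \<F> cv in \<open>auto simp: convex_Inter\<close>)+
      then show ?thesis
        unfolding \<F> using mp(3)[unfolded gh] by blast
    qed
  qed 
qed

lemma Helly_sub:
  fixes \<F> :: "'a::euclidean_space set set"
  assumes "finite \<F>"
    and "\<forall>S\<in>\<F>. convex S \<and> S \<subseteq> \<xi>" "dim \<xi> \<le> k" "\<forall>T\<subseteq>\<F>. card T \<le> k + 1 \<longrightarrow> \<Inter>T \<noteq> {}"
  shows "\<Inter>\<F> \<noteq> {}"
proof (cases "card \<F> \<le> k + 1")
  case True then show ?thesis using assms(4) by blast
next
  case False
  show ?thesis
    by (rule Helly_sub_induct[of \<F> "card \<F>" k \<xi>]) (use False assms in auto)
qed

lemma convex_pre1:
  fixes K :: "'a::real_vector set"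
  assumes "convex K"
  shows "convex {x. c *\<^sub>R (y - x) \<in> K}"
  unfolding convex_def
proof (intro allI impI ballI)
  fix a b u v assume a: "a \<in> {x. c *\<^sub>R (y - x) \<in> K}" and b: "b \<in> {x. c *\<^sub>R (y - x) \<in> K}"
    and uv: "0 \<le> u" "0 \<le> v" "u + v = (1::real)"
  have yy: "y = u *\<^sub>R y + v *\<^sub>R y" using uv by (metis scaleR_left_distrib scaleR_one)
  have "c *\<^sub>R (y - (u *\<^sub>R a + v *\<^sub>R b)) = u *\<^sub>R (c *\<^sub>R (y - a)) + v *\<^sub>R (c *\<^sub>R (y - b))"
    by (subst yy) (simp add: algebra_simps)
  moreover have "u *\<^sub>R (c *\<^sub>R (y - a)) + v *\<^sub>R (c *\<^sub>R (y - b)) \<in> K"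
    using assms a b uv unfolding convex_def by blast
  ultimately show "u *\<^sub>R a + v *\<^sub>R b \<in> {x. c *\<^sub>R (y - x) \<in> K}" by simp
qed

lemma convex_pre2:
  fixes K :: "'a::real_vector set"
  assumes "convex K"
  shows "convex {x. c *\<^sub>R (x - y) \<in> K}"
proof -
  have "{x. c *\<^sub>R (x - y) \<in> K} = {x. (- c) *\<^sub>R (y - x) \<in> K}"
  proof -
    have "\<And>x. (- c) *\<^sub>R (y - x) = c *\<^sub>R (x - y)" by (simp add: algebra_simps)
    then show ?thesis by simp
  qed
  then show ?thesis using convex_pre1[OF assms, of "- c" y] by simp
qed

lemma part1:
  fixes V :: "'a::euclidean_space set"
  assumes fin: "finite V" and sub: "subspace \<xi>" and dimk: "dim \<xi> = k" and k1: "k \<ge> 1"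
  shows "\<exists>w. (\<lambda>x. x + w) ` (orth_proj \<xi> ` (convex hull V))
           \<subseteq> orth_proj \<xi> ` (scaleR (real k) ` (uminus ` (convex hull V)))"
proof -
  define P where "P = orth_proj \<xi>"
  have lin: "linear P" unfolding P_def by (rule orth_proj_linear[OF sub])
  have Pin: "\<And>x. P x \<in> \<xi>" unfolding P_def using orth_proj_spec[OF sub] by blast
  define K where "K = P ` (convex hull V)"
  have K: "K = convex hull (P ` V)" unfolding K_def by (rule convex_hull_linear_image[OF lin])
  have cK: "convex K" unfolding K by simp
  have kpos: "real k > 0" using k1 by simp
  define C where "C v = {y. y \<in> \<xi> \<and> (1 / real k) *\<^sub>R (y - P v) \<in> K}" for v
  have Cc: "\<forall>S\<in>C ` V. convex S \<and> S \<subseteq> \<xi>"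
  proof
    fix S assume "S \<in> C ` V"
    then obtain v where S: "S = C v" by auto
    have "S = \<xi> \<inter> {y. (1 / real k) *\<^sub>R (y - P v) \<in> K}" unfolding S C_def by auto
    moreover have "convex (\<xi> \<inter> {y. (1 / real k) *\<^sub>R (y - P v) \<in> K})"
      by (rule convex_Int[OF subspace_imp_convex[OF sub] convex_pre2[OF cK]])
    ultimately show "convex S \<and> S \<subseteq> \<xi>" unfolding S C_def by auto
  qed
  have hyp: "\<forall>T\<subseteq>C ` V. card T \<le> k + 1 \<longrightarrow> \<Inter>T \<noteq> {}"
  proof (intro allI impI)
    fix T assume T: "T \<subseteq> C ` V" and cT: "card T \<le> k + 1"
    obtain U where U: "U \<subseteq> V" "inj_on C U" "T = C ` U" using T subset_image_inj by metis
    have fU: "finite U" using U fin finite_subset by blast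
    have cU: "card U \<le> k + 1" using U cT by (simp add: card_image)
    show "\<Inter>T \<noteq> {}"
    proof (cases "U = {}")
      case True then show ?thesis using U by simp
    next
      case False
      define m where "m = card U"
      have m1: "real m \<ge> 1" using False fU m_def by (simp add: Suc_leI card_gt_0_iff)
      have mk: "real m \<le> real k + 1" using cU m_def by simp
      define y where "y = ((real k + 1) / real m) *\<^sub>R (\<Sum>j\<in>U. P j)"
      have yC: "y \<in> C i" if i: "i \<in> U" for i
      proof -
        have "y \<in> \<xi>" unfolding y_def
          by (rule subspace_scale[OF sub], rule subspace_sum[OF sub]) (use Pin in auto)
        moreover have "(1 / real k) *\<^sub>R (y - P i) \<in> K"
        proof -
          define a where "a j = (real k + 1) / (real m * real k) - (if j = i then 1 / real k else 0)" for j
          have "(\<Sum>j\<in>U. a j *\<^sub>R P j) = ((real k + 1) / (real m * real k)) *\<^sub>R (\<Sum>j\<in>U. P j)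
                  - (\<Sum>j\<in>U. (if j = i then 1 / real k else 0) *\<^sub>R P j)"
            unfolding a_def by (simp add: scaleR_left_diff_distrib sum_subtractf scaleR_sum_right)
          also have "(\<Sum>j\<in>U. (if j = i then 1 / real k else 0) *\<^sub>R P j) = (1 / real k) *\<^sub>R P i"
            using fU i by (simp add: if_distrib[of "\<lambda>t. t *\<^sub>R P _"] cong: if_cong)
          also have "((real k + 1) / (real m * real k)) *\<^sub>R (\<Sum>j\<in>U. P j) = (1 / real k) *\<^sub>R y"
            unfolding y_def using kpos m1 by simp
          finally have eq: "(\<Sum>j\<in>U. a j *\<^sub>R P j) = (1 / real k) *\<^sub>R (y - P i)"
            by (simp add: scaleR_right_diff_distrib)
          have "(\<Sum>j\<in>U. a j *\<^sub>R P j) \<in> K"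
          proof (rule convex_sum[OF fU cK])
            have "(\<Sum>j\<in>U. a j) = real m * ((real k + 1) / (real m * real k)) - 1 / real k"
              unfolding a_def using fU i m_def by (simp add: sum_subtractf)
            also have "\<dots> = 1" using m1 kpos by (simp add: field_simps)
            finally show "(\<Sum>j\<in>U. a j) = 1" .
            fix j assume "j \<in> U"
            have "1 / real k \<le> (real k + 1) / (real m * real k)"
              using m1 mk kpos by (simp add: field_simps)
            moreover have "0 \<le> (real k + 1) / (real m * real k)" using m1 kpos by simp
            ultimately show "0 \<le> a j" unfolding a_def by auto
            show "P j \<in> K" unfolding K using \<open>j \<in> U\<close> U by (simp add: hull_inc subsetD)
          qed
          then show ?thesis using eq by simp
        qed
        ultimately show ?thesis unfolding C_def by simp
      qed
      then have "y \<in> \<Inter>T" using U by auto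
      then show ?thesis by blast
    qed
  qed
  have "\<Inter>(C ` V) \<noteq> {}"
    by (rule Helly_sub[OF _ Cc _ hyp]) (use fin dimk in auto)
  then obtain y where y: "\<And>v. v \<in> V \<Longrightarrow> y \<in> C v" by blast
  have "P ` V \<subseteq> {x. (1 / real k) *\<^sub>R (y - x) \<in> K}"
    using y unfolding C_def by auto
  then have "convex hull (P ` V) \<subseteq> {x. (1 / real k) *\<^sub>R (y - x) \<in> K}"
    by (rule hull_minimal) (rule convex_pre1[OF cK])
  then have D: "K \<subseteq> {x. (1 / real k) *\<^sub>R (y - x) \<in> K}" using K by simp
  show ?thesis
  proof (rule exI[of _ "- y"], rule subsetI)
    fix z assume "z \<in> (\<lambda>x. x + - y) ` (orth_proj \<xi> ` (convex hull V))"
    then obtain x where x: "x \<in> K" "z = x - y" unfolding K_def P_def by auto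
    then have "(1 / real k) *\<^sub>R (y - x) \<in> K" using D by auto
    then obtain t where t: "t \<in> convex hull V" "P t = (1 / real k) *\<^sub>R (y - x)" unfolding K_def by auto
    have e1: "P (real k *\<^sub>R (- t)) = real k *\<^sub>R (- P t)"
      using lin by (simp add: linear_cmul linear_neg)
    have "real k *\<^sub>R P t = y - x" using t(2) kpos by simp
    then have "real k *\<^sub>R (- P t) = z" using x(2) by (simp add: scaleR_right.minus)
    with e1 have e: "P (real k *\<^sub>R (- t)) = z" by simp
    have "real k *\<^sub>R (- t) \<in> scaleR (real k) ` (uminus ` (convex hull V))" using t(1) by blast
    then show "z \<in> orth_proj \<xi> ` (scaleR (real k) ` (uminus ` (convex hull V)))"
      using e unfolding P_def by blast
  qed
qed


theorem mainTheorem9: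
  fixes T :: "(real^'n) set" and d :: nat
  assumes "CARD('n) \<ge> 2" and "1 \<le> d" and "d \<le> CARD('n) - 1"
    and "regular_simplex T"
  shows "(\<forall>\<xi>. subspace \<xi> \<and> dim \<xi> = CARD('n) - d \<longrightarrow>
            (\<exists>w. (\<lambda>x. x + w) ` (orth_proj \<xi> ` T)
                  \<subseteq> orth_proj \<xi> ` (scaleR (real (CARD('n) - d)) ` (uminus ` T))))
       \<and> (\<forall>c::real. 0 < c \<and> c < real CARD('n) / real (CARD('n) - d) \<longrightarrow>
            \<not> (\<exists>w. (\<lambda>x. x + w) ` T
                  \<subseteq> scaleR c ` (scaleR (real (CARD('n) - d)) ` (uminus ` T))))"
proof -
  obtain V r where V: "finite V" "card V = DIM(real^'n) + 1" "r > 0"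
      "\<forall>u\<in>V. \<forall>v\<in>V. u \<noteq> v \<longrightarrow> dist u v = r" "T = convex hull V"
    using assms(4) unfolding regular_simplex_def by blast
  define k where "k = CARD('n) - d"
  have k1: "k \<ge> 1" using assms unfolding k_def by linarith
  have kr: "real k = real CARD('n) - real d" using assms unfolding k_def by (simp add: of_nat_diff)
  have P1: "\<forall>\<xi>. subspace \<xi> \<and> dim \<xi> = k \<longrightarrow>
            (\<exists>w. (\<lambda>x. x + w) ` (orth_proj \<xi> ` T)
                  \<subseteq> orth_proj \<xi> ` (scaleR (real k) ` (uminus ` T)))"
    using part1[OF V(1) _ _ k1] V(5) by blast
  have P2: "\<not> (\<exists>w. (\<lambda>x. x + w) ` T \<subseteq> scaleR c ` (scaleR (real k) ` (uminus ` T)))"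
    if c: "0 < c" "c < real CARD('n) / real k" for c
  proof
    assume "\<exists>w. (\<lambda>x. x + w) ` T \<subseteq> scaleR c ` (scaleR (real k) ` (uminus ` T))"
    then obtain w where w: "(\<lambda>x. x + w) ` T \<subseteq> scaleR c ` (scaleR (real k) ` (uminus ` T))" by blast
    have inc: "\<forall>u\<in>V. \<exists>x\<in>convex hull V. u + w = - ((c * real k) *\<^sub>R x)"
    proof
      fix u assume "u \<in> V"
      then have "u \<in> T" using V(5) by (simp add: hull_inc)
      then have "u + w \<in> scaleR c ` (scaleR (real k) ` (uminus ` T))" using w by blast
      then obtain x where "x \<in> T" "u + w = c *\<^sub>R (real k *\<^sub>R (- x))" by blast
      then show "\<exists>x\<in>convex hull V. u + w = - ((c * real k) *\<^sub>R x)" using V(5) by auto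
    qed
    have N: "card V = CARD('n) + 1" "CARD('n) + 1 > 0" using V(2) by auto
    have "real (CARD('n) + 1) - 1 \<le> c * real k"
      by (rule no_translate[OF V(1) N V(3) V(4) _ _ inc])
         (use gram[OF V(1) N V(4)] k1 c in auto)
    moreover have "c * real k < real CARD('n)" using c k1 by (simp add: field_simps)
    ultimately show False by simp
  qed
  show ?thesis using P1 P2 unfolding k_def by blast
qed
end
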